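(* Let $\mathcal F=\{F_1,\dots,F_k\}$, $\mathcal I=\{0,1\}^k\setminus\{(0,\dots,0)\}$, and let $\mathcal F_{asc}$ be a nonempty ascending class of nonempty subsets of $\mathcal F$. Let $\mathbf A$ be the matrix with rows indexed by $\mathcal F_{des}=2^{\mathcal F}\setminus\mathcal F_{asc}\setminus\{\varnothing\}$ and columns indexed by $\mathcal I$, with entry $1$ in row $W$, column $\boldsymbol i$ if $W\subseteq\phi(\boldsymbol i)$ and $0$ otherwise. Then the hierarchical AS model $HAS(\mathcal F_{asc})$ is the relational model generated by $\mathbf A$, i.e. $HAS(\mathcal F_{asc})=\{\boldsymbol p>0 \text{ probability distribution on }\mathcal I:\ \log\boldsymbol p=\mathbf A^\top\boldsymbol\beta\text{ for some }\boldsymbol\beta\}$, and this relational model has no overall effect: the all-ones vector of length $2^k-1$ does not belong to the row space of $\mathbf A$.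
   Context: For $\boldsymbol i\in\mathcal I$, $\phi(\boldsymbol i)$ is the set of features whose coordinate in $\boldsymbol i$ equals $1$; write $p(V)$ for the probability of the cell with $\phi(\boldsymbol i)=V$. A class of subsets is ascending if it is closed under taking supersets within $\mathcal F$. For nonempty $V\subseteq\mathcal F$, $\mathrm{CASR}(V\mid\mathcal F\setminus V=\mathbf 0)=\prod_{\varnothing\ne U\subseteq V,\,|U|\equiv|V|\,(2)}p(U)\big/\prod_{\varnothing\ne U\subseteq V,\,|U|\not\equiv|V|\,(2)}p(U)$ (called $\mathrm{ASR}(\mathcal F)$ when $V=\mathcal F$). The hierarchical Aitchison–Silvey model $HAS(\mathcal F_{asc})$ is the set of strictly positive probability distributions $\boldsymbol p$ on $\mathcal I$ with $\mathrm{CASR}(V\mid\mathcal F\setminus V=\mathbf 0)=1$ for all $V\in\mathcal F_{asc}$; equivalently, writing $\log p(\boldsymbol i)=\sum_{\varnothing\ne V\subseteq\phi(\boldsymbol i)}\beta_V$ (a bijective reparameterization), those with $\beta_V=0$ for all $V\in\mathcal F_{asc}$. *)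

theory Defs
  imports Complex_Main
begin

(* Features F = UNIV :: 'f set (a finite type with k = CARD('f) elements).
   A cell i in {0,1}^k is a function 'f => bool; I excludes the all-zero cell. *)

definition cells :: "('f::finite \<Rightarrow> bool) set" where
  "cells = {i. i \<noteq> (\<lambda>_. False)}"

definition phi :: "('f \<Rightarrow> bool) \<Rightarrow> 'f set" where
  "phi i = {f. i f}"

definition cellp :: "(('f \<Rightarrow> bool) \<Rightarrow> real) \<Rightarrow> 'f set \<Rightarrow> real" where
  "cellp p U = p (\<lambda>f. f \<in> U)"

definition CASR :: "(('f::finite \<Rightarrow> bool) \<Rightarrow> real) \<Rightarrow> 'f set \<Rightarrow> real" where
  "CASR p V =
     (\<Prod>U\<in>{U. U \<subseteq> V \<and> U \<noteq> {} \<and> even (card U + card V)}. cellp p U) /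
     (\<Prod>U\<in>{U. U \<subseteq> V \<and> U \<noteq> {} \<and> odd (card U + card V)}. cellp p U)"

definition pos_prob_dist :: "(('f::finite \<Rightarrow> bool) \<Rightarrow> real) \<Rightarrow> bool" where
  "pos_prob_dist p \<longleftrightarrow> (\<forall>i\<in>cells. p i > 0) \<and> (\<Sum>i\<in>cells. p i) = 1"

definition HAS :: "'f::finite set set \<Rightarrow> (('f \<Rightarrow> bool) \<Rightarrow> real) set" where
  "HAS Fasc = {p. pos_prob_dist p \<and> (\<forall>V\<in>Fasc. CASR p V = 1)}"

definition ascending :: "'f set set \<Rightarrow> bool" where
  "ascending C \<longleftrightarrow> (\<forall>V\<in>C. \<forall>W. V \<subseteq> W \<longrightarrow> W \<in> C)"

definition Fdes :: "'f set set \<Rightarrow> 'f set set" where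
  "Fdes Fasc = {W. W \<notin> Fasc \<and> W \<noteq> {}}"

definition Amat :: "'f set \<Rightarrow> ('f \<Rightarrow> bool) \<Rightarrow> real" where
  "Amat W i = (if W \<subseteq> phi i then 1 else 0)"

definition relational_model ::
  "'r set \<Rightarrow> ('r \<Rightarrow> ('f::finite \<Rightarrow> bool) \<Rightarrow> real) \<Rightarrow> (('f \<Rightarrow> bool) \<Rightarrow> real) set" where
  "relational_model R A =
     {p. pos_prob_dist p \<and> (\<exists>\<beta>. \<forall>i\<in>cells. ln (p i) = (\<Sum>W\<in>R. A W i * \<beta> W))}"

definition has_overall_effect :: "'r set \<Rightarrow> ('r \<Rightarrow> ('f::finite \<Rightarrow> bool) \<Rightarrow> real) \<Rightarrow> bool" where
  "has_overall_effect R A \<longleftrightarrow> (\<exists>c. \<forall>i\<in>cells. (\<Sum>W\<in>R. c W * A W i) = 1)"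

end

theory Submission
  imports Defs
begin

lemma alt_sum:
  assumes "finite B" "A \<subseteq> B"
  shows "(\<Sum>T | T \<subseteq> B \<and> A \<subseteq> T. (-1::real) ^ card T) = (if A = B then (-1) ^ card A else 0)"
proof (cases "A = B")
  case True
  then have "{T. T \<subseteq> B \<and> A \<subseteq> T} = {B}" by auto
  then show ?thesis using True by simp
next
  case False
  then have "A \<subset> B" using assms by auto
  have fin: "finite {T. T \<subseteq> B \<and> A \<subseteq> T}" using assms(1) by simp
  have "card {x. x \<in> {T. T \<subseteq> B \<and> A \<subseteq> T} \<and> even (card x)}
      = card {x. x \<in> {T. T \<subseteq> B \<and> A \<subseteq> T} \<and> odd (card x)}"
    using card_subsupersets_even_odd[OF assms(1) \<open>A \<subset> B\<close>] by simp
  from sum_alternating_cancels[OF fin this] show ?thesis using False by simp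
qed

lemma phi_ind [simp]: "phi (\<lambda>f. f \<in> U) = U"
  by (simp add: phi_def)

lemma cells_ind [simp]: "((\<lambda>f. f \<in> U) \<in> (cells :: ('f::finite \<Rightarrow> bool) set)) \<longleftrightarrow> U \<noteq> {}"
  by (auto simp: cells_def fun_eq_iff)

lemma ind_phi [simp]: "(\<lambda>f. f \<in> phi i) = i"
  by (simp add: phi_def)

lemma ln_CASR:
  fixes p :: "('f::finite \<Rightarrow> bool) \<Rightarrow> real"
  assumes pos: "\<And>U. U \<noteq> {} \<Longrightarrow> cellp p U > 0"
  shows "CASR p V > 0"
    and "ln (CASR p V) = (\<Sum>U | U \<subseteq> V \<and> U \<noteq> {}. (-1) ^ (card U + card V) * ln (cellp p U))"
proof -
  let ?E = "{U. U \<subseteq> V \<and> U \<noteq> {} \<and> even (card U + card V)}"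
  let ?O = "{U. U \<subseteq> V \<and> U \<noteq> {} \<and> odd (card U + card V)}"
  have P1: "prod (cellp p) ?E > 0" by (rule prod_pos) (use pos in auto)
  have P2: "prod (cellp p) ?O > 0" by (rule prod_pos) (use pos in auto)
  show "CASR p V > 0" unfolding CASR_def by (rule divide_pos_pos[OF P1 P2])
  have "ln (CASR p V) = ln (prod (cellp p) ?E) - ln (prod (cellp p) ?O)"
    unfolding CASR_def by (rule ln_divide_pos[OF P1 P2])
  also have "\<dots> = (\<Sum>U\<in>?E. ln (cellp p U)) - (\<Sum>U\<in>?O. ln (cellp p U))"
  proof -
    have nz: "\<And>U. U \<noteq> {} \<Longrightarrow> cellp p U \<noteq> 0" using pos by (metis less_irrefl)
    have "ln (prod (cellp p) ?E) = (\<Sum>U\<in>?E. ln (cellp p U))"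
      by (rule ln_prod) (simp_all add: nz)
    moreover have "ln (prod (cellp p) ?O) = (\<Sum>U\<in>?O. ln (cellp p U))"
      by (rule ln_prod) (simp_all add: nz)
    ultimately show ?thesis by simp
  qed
  also have "\<dots> = (\<Sum>U | U \<subseteq> V \<and> U \<noteq> {}. (if even (card U + card V) then ln (cellp p U) else - ln (cellp p U)))"
  proof -
    let ?S = "{U. U \<subseteq> V \<and> U \<noteq> {}}"
    let ?P = "{U. even (card U + card V)}"
    have e1: "?S \<inter> ?P = ?E" by auto
    have e2: "?S \<inter> - ?P = ?O" by auto
    have "(\<Sum>U\<in>?S. (if even (card U + card V) then ln (cellp p U) else - ln (cellp p U)))
        = (\<Sum>U\<in>?S \<inter> ?P. ln (cellp p U)) + (\<Sum>U\<in>?S \<inter> - ?P. - ln (cellp p U))"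
      by (rule sum.If_cases) simp
    also have "\<dots> = (\<Sum>U\<in>?E. ln (cellp p U)) - (\<Sum>U\<in>?O. ln (cellp p U))"
      unfolding e1 e2 sum_negf by simp
    finally show ?thesis by simp
  qed
  also have "\<dots> = (\<Sum>U | U \<subseteq> V \<and> U \<noteq> {}. (-1) ^ (card U + card V) * ln (cellp p U))"
    by (rule sum.cong) auto
  finally show "ln (CASR p V) = (\<Sum>U | U \<subseteq> V \<and> U \<noteq> {}. (-1) ^ (card U + card V) * ln (cellp p U))" .
qed

lemma vanish:
  fixes g :: "'f::finite set \<Rightarrow> real" and c :: "'f set \<Rightarrow> real"
  assumes g: "\<And>U. U \<noteq> {} \<Longrightarrow> g U = (\<Sum>W\<in>Fdes Fasc. Amat W (\<lambda>f. f \<in> U) * c W)"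
    and V: "V \<in> Fasc"
  shows "(\<Sum>U | U \<subseteq> V \<and> U \<noteq> {}. (-1) ^ (card U + card V) * g U) = 0"
proof -
  let ?S = "{U. U \<subseteq> V \<and> U \<noteq> {}}"
  have "(\<Sum>U\<in>?S. (-1) ^ (card U + card V) * g U)
      = (\<Sum>U\<in>?S. \<Sum>W\<in>Fdes Fasc. (-1) ^ (card U + card V) * (if W \<subseteq> U then c W else 0))"
    by (rule sum.cong) (auto simp: g sum_distrib_left Amat_def intro!: sum.cong split: if_splits)
  also have "\<dots> = (\<Sum>W\<in>Fdes Fasc. \<Sum>U\<in>?S. (-1) ^ (card U + card V) * (if W \<subseteq> U then c W else 0))"
    by (rule sum.swap)
  also have "\<dots> = 0"
  proof (rule sum.neutral, rule ballI)
    fix W assume W: "W \<in> Fdes Fasc"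
    then have Wne: "W \<noteq> {}" and WV: "W \<noteq> V" using V by (auto simp: Fdes_def)
    have "(\<Sum>U\<in>?S. (-1) ^ (card U + card V) * (if W \<subseteq> U then c W else 0))
        = (\<Sum>U\<in>?S. if W \<subseteq> U then (-1) ^ (card U + card V) * c W else 0)"
      by (rule sum.cong) auto
    also have "\<dots> = (\<Sum>U\<in>{U\<in>?S. W \<subseteq> U}. (-1) ^ (card U + card V) * c W)"
      by (subst sum.inter_filter) auto
    also have "{U\<in>?S. W \<subseteq> U} = {U. U \<subseteq> V \<and> W \<subseteq> U}" using Wne by auto
    also have "(\<Sum>U\<in>{U. U \<subseteq> V \<and> W \<subseteq> U}. (-1) ^ (card U + card V) * c W)
        = (-1) ^ card V * c W * (\<Sum>U\<in>{U. U \<subseteq> V \<and> W \<subseteq> U}. (-1::real) ^ card U)"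
      by (simp add: sum_distrib_left power_add mult_ac)
    also have "\<dots> = 0"
    proof (cases "W \<subseteq> V")
      case True
      then show ?thesis using alt_sum[of V W] WV by simp
    next
      case False
      then have e: "{U. U \<subseteq> V \<and> W \<subseteq> U} = {}" by auto
      show ?thesis unfolding e by simp
    qed
    finally show "(\<Sum>U\<in>?S. (-1) ^ (card U + card V) * (if W \<subseteq> U then c W else 0)) = 0" .
  qed
  finally show ?thesis .
qed

theorem theorem4:
  fixes Fasc :: "'f::finite set set"
  assumes "Fasc \<noteq> {}"
    and "\<forall>V\<in>Fasc. V \<noteq> {}"
    and "ascending Fasc"
  shows "HAS Fasc = relational_model (Fdes Fasc) Amat
         \<and> \<not> has_overall_effect (Fdes Fasc) (Amat :: 'f set \<Rightarrow> ('f \<Rightarrow> bool) \<Rightarrow> real)"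
proof (intro conjI)
  show "HAS Fasc = relational_model (Fdes Fasc) Amat"
  proof (intro set_eqI iffI)
    fix p :: "('f \<Rightarrow> bool) \<Rightarrow> real"
    assume "p \<in> HAS Fasc"
    then have pd: "pos_prob_dist p" and cas: "\<And>V. V \<in> Fasc \<Longrightarrow> CASR p V = 1"
      by (auto simp: HAS_def)
    have pos: "\<And>U. U \<noteq> {} \<Longrightarrow> cellp p U > 0"
      using pd by (auto simp: pos_prob_dist_def cellp_def)
    define \<beta> where "\<beta> W = (\<Sum>U | U \<subseteq> W \<and> U \<noteq> {}. (-1) ^ (card U + card W) * ln (cellp p U))" for W
    have b0: "\<beta> V = 0" if "V \<in> Fasc" for V
      using ln_CASR(2)[OF pos, of V] cas[OF that] by (simp add: \<beta>_def)
    have "ln (p i) = (\<Sum>W\<in>Fdes Fasc. Amat W i * \<beta> W)" if i: "i \<in> cells" for i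
    proof -
      define S where "S = phi i"
      have iS: "i = (\<lambda>f. f \<in> S)" by (simp add: S_def)
      have Sne: "S \<noteq> {}" using i iS by auto
      let ?A = "{W. W \<noteq> {} \<and> W \<subseteq> S}"
      have "(\<Sum>W\<in>Fdes Fasc. Amat W i * \<beta> W) = (\<Sum>W\<in>{W. W \<noteq> {}}. if W \<subseteq> S then \<beta> W else 0)"
      proof (rule sum.mono_neutral_cong_left)
        show "\<forall>W\<in>{W. W \<noteq> {}} - Fdes Fasc. (if W \<subseteq> S then \<beta> W else 0) = 0"
          using b0 by (auto simp: Fdes_def)
      qed (auto simp: Fdes_def Amat_def iS)
      also have "\<dots> = (\<Sum>W\<in>?A. \<beta> W)"
        by (simp add: sum.inter_filter[symmetric] conj_commute)
      also have "\<dots> = (\<Sum>W\<in>?A. \<Sum>U\<in>{U\<in>?A. U \<subseteq> W}. (-1) ^ (card U + card W) * ln (cellp p U))"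
        unfolding \<beta>_def by (rule sum.cong) (auto intro!: sum.cong)
      also have "\<dots> = (\<Sum>U\<in>?A. \<Sum>W\<in>{W\<in>?A. U \<subseteq> W}. (-1) ^ (card U + card W) * ln (cellp p U))"
        by (rule sum.swap_restrict) auto
      also have "\<dots> = (\<Sum>U\<in>?A. ln (cellp p U) * (-1) ^ card U * (\<Sum>W | W \<subseteq> S \<and> U \<subseteq> W. (-1::real) ^ card W))"
      proof (rule sum.cong[OF refl])
        fix U assume "U \<in> ?A"
        then have "{W\<in>?A. U \<subseteq> W} = {W. W \<subseteq> S \<and> U \<subseteq> W}" by auto
        then show "(\<Sum>W\<in>{W\<in>?A. U \<subseteq> W}. (-1) ^ (card U + card W) * ln (cellp p U))
            = ln (cellp p U) * (-1) ^ card U * (\<Sum>W | W \<subseteq> S \<and> U \<subseteq> W. (-1::real) ^ card W)"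
          by (simp add: sum_distrib_left power_add mult_ac)
      qed
      also have "\<dots> = (\<Sum>U\<in>?A. if U = S then ln (cellp p S) else 0)"
      proof (rule sum.cong[OF refl])
        fix U assume "U \<in> ?A"
        then show "ln (cellp p U) * (-1) ^ card U * (\<Sum>W | W \<subseteq> S \<and> U \<subseteq> W. (-1::real) ^ card W)
            = (if U = S then ln (cellp p S) else 0)"
          using alt_sum[of S U] by (simp flip: power_add)
      qed
      also have "\<dots> = ln (cellp p S)"
        using Sne by simp
      also have "\<dots> = ln (p i)" by (simp add: cellp_def iS)
      finally show ?thesis by simp
    qed
    then show "p \<in> relational_model (Fdes Fasc) Amat"
      using pd by (auto simp: relational_model_def)
  next
    fix p :: "('f \<Rightarrow> bool) \<Rightarrow> real"
    assume "p \<in> relational_model (Fdes Fasc) Amat"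
    then obtain \<beta> where pd: "pos_prob_dist p"
      and b: "\<And>i. i \<in> cells \<Longrightarrow> ln (p i) = (\<Sum>W\<in>Fdes Fasc. Amat W i * \<beta> W)"
      by (auto simp: relational_model_def)
    have pos: "\<And>U. U \<noteq> {} \<Longrightarrow> cellp p U > 0"
      using pd by (auto simp: pos_prob_dist_def cellp_def)
    have "CASR p V = 1" if V: "V \<in> Fasc" for V
    proof -
      have "ln (CASR p V) = (\<Sum>U | U \<subseteq> V \<and> U \<noteq> {}. (-1) ^ (card U + card V) * ln (cellp p U))"
        by (rule ln_CASR(2)[OF pos])
      also have "\<dots> = 0"
        by (rule vanish[OF _ V, of "\<lambda>U. ln (cellp p U)" \<beta>]) (simp add: cellp_def b)
      finally show ?thesis using ln_CASR(1)[OF pos, of V] by simp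
    qed
    then show "p \<in> HAS Fasc" using pd by (auto simp: HAS_def)
  qed
next
  show "\<not> has_overall_effect (Fdes Fasc) (Amat :: 'f set \<Rightarrow> ('f \<Rightarrow> bool) \<Rightarrow> real)"
  proof
    assume "has_overall_effect (Fdes Fasc) (Amat :: 'f set \<Rightarrow> ('f \<Rightarrow> bool) \<Rightarrow> real)"
    then obtain c where c: "\<And>i. i \<in> (cells :: ('f \<Rightarrow> bool) set) \<Longrightarrow> (\<Sum>W\<in>Fdes Fasc. c W * Amat W i) = 1"
      by (auto simp: has_overall_effect_def)
    have U: "UNIV \<in> Fasc"
      using assms(1,3) by (auto simp: ascending_def)
    have g: "(\<lambda>_. 1::real) U = (\<Sum>W\<in>Fdes Fasc. Amat W (\<lambda>f. f \<in> U) * c W)" if "U \<noteq> {}" for U :: "'f set"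
      using c[of "\<lambda>f. f \<in> U"] that by (simp add: mult.commute)
    have "(\<Sum>U | U \<subseteq> (UNIV :: 'f set) \<and> U \<noteq> {}. (-1) ^ (card U + card (UNIV :: 'f set)) * (\<lambda>_. 1::real) U) = 0"
      using vanish[OF g U] by simp
    moreover have "(\<Sum>U | U \<subseteq> (UNIV :: 'f set) \<and> U \<noteq> {}. (-1) ^ (card U + card (UNIV :: 'f set)) * (\<lambda>_. 1::real) U)
        = - ((-1) ^ card (UNIV :: 'f set))"
    proof -
      have A: "(\<Sum>U\<in>(UNIV :: 'f set set). (-1::real) ^ card U) = 0"
        using alt_sum[of "UNIV :: 'f set" "{}"] by simp
      have "(\<Sum>U\<in>(UNIV :: 'f set set). (-1::real) ^ card U)
          = 1 + (\<Sum>U\<in>UNIV - {{}::'f set}. (-1::real) ^ card U)"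
        by (subst sum.remove[of "UNIV :: 'f set set" "{}"]) simp_all
      then have B: "(\<Sum>U\<in>UNIV - {{}::'f set}. (-1::real) ^ card U) = -1" using A by simp
      have e: "{U. U \<subseteq> (UNIV :: 'f set) \<and> U \<noteq> {}} = UNIV - {{}}" by auto
      have "(\<Sum>U | U \<subseteq> (UNIV :: 'f set) \<and> U \<noteq> {}. (-1) ^ (card U + card (UNIV :: 'f set)) * (\<lambda>_. 1::real) U)
          = (-1) ^ card (UNIV :: 'f set) * (\<Sum>U\<in>UNIV - {{}::'f set}. (-1::real) ^ card U)"
        unfolding e sum_distrib_left by (rule sum.cong) (simp_all add: power_add mult_ac)
      then show ?thesis using B by simp
    qed
    ultimately show False by simp
  qed
qed

end
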